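(* Let $\sigma=(a_1,\ldots,a_s)$ be a partition of the positive integer $r$ with $a_1\ge a_2\ge\cdots\ge a_s\ge 1$, let $n\ge s$ and $q\ge a_1$, and let $H=H(n,r,q\mid\sigma)$. Let $1\le k\le r-1$. Then \[\alpha_k(H)=\max\Big\{\, q\,(t(B)-1)+\sum_{i=t(B)}^{s} b_i+(n-s)\,b_s \;:\; B=(b_1,\ldots,b_n)\in M(q,k,\sigma)\Big\}.\]
   Context: A $\sigma$-hypergraph $H=H(n,r,q\mid\sigma)$, for a partition $\sigma=(a_1,\ldots,a_s)$ of $r$ with $s=s(\sigma)$ parts, is the $r$-uniform hypergraph whose vertex set is the disjoint union of $n$ classes $V_1,\ldots,V_n$, each of size $q$; an $r$-subset $K$ of vertices is an edge iff the multiset of non-zero values $|K\cap V_i|$ ($1\le i\le n$) equals $\sigma$. For $1\le k\le r-1$, a set $S$ of vertices of an $r$-uniform hypergraph is $k$-independent if $|E\cap S|\le k$ for every edge $E$; $\alpha_k(H)$ is the largest cardinality of a $k$-independent set. A sequence $B=(b_1,\ldots,b_n)$ of non-negative integers is $(q,k,\sigma)$-feasible if $b_1\ge b_2\ge\cdots\ge b_n$, $b_j=b_s$ for all $j\ge s$, $q\ge\max\{a_1,b_1\}$, and $\sum_{i=1}^{s}\min\{a_i,b_i\}=k$. A feasible sequence $B^*$ dominates a feasible sequence $B$ if $b^*_i\ge b_i$ for all $i$ and $\sum_i b^*_i>\sum_i b_i$; a feasible sequence is maximal if no feasible sequence dominates it. $M(q,k,\sigma)$ is the set of all maximal $(q,k,\sigma)$-feasible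 sequences. For a feasible sequence $B$, $t(B)$ denotes the smallest index $t\in\{1,\ldots,s\}$ with $b_t<a_t$ (such an index exists since $k<r$). *)

theory Defs
  imports Main "HOL-Library.Multiset"
begin

text \<open>Conventions: the partition sigma = (a_1,...,a_s) is the list a (0-based, so
a_i = a ! (i-1)); a sequence B = (b_1,...,b_n) is a list of length n (b_i = B ! (i-1)).\<close>

definition sigma_vertices :: "nat \<Rightarrow> nat \<Rightarrow> (nat \<times> nat) set" where
  "sigma_vertices n q = {1..n} \<times> {..<q}"

definition vclass :: "nat \<Rightarrow> nat \<Rightarrow> (nat \<times> nat) set" where
  "vclass q i = {i} \<times> {..<q}"

definition sigma_edges :: "nat \<Rightarrow> nat \<Rightarrow> nat list \<Rightarrow> (nat \<times> nat) set set" where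
  "sigma_edges n q a = {K. K \<subseteq> sigma_vertices n q \<and> card K = sum_list a \<and>
     filter_mset (\<lambda>x. x \<noteq> 0) (image_mset (\<lambda>i. card (K \<inter> vclass q i)) (mset_set {1..n}))
       = mset a}"

definition k_independent :: "'v set set \<Rightarrow> nat \<Rightarrow> 'v set \<Rightarrow> bool" where
  "k_independent E k S \<longleftrightarrow> (\<forall>e\<in>E. card (e \<inter> S) \<le> k)"

definition alpha_k :: "nat \<Rightarrow> 'v set \<Rightarrow> 'v set set \<Rightarrow> nat" where
  "alpha_k k V E = Max {card S | S. S \<subseteq> V \<and> k_independent E k S}"

definition feasible :: "nat \<Rightarrow> nat \<Rightarrow> nat list \<Rightarrow> nat \<Rightarrow> nat list \<Rightarrow> bool" where
  "feasible q k a n B \<longleftrightarrow>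
     length B = n \<and> sorted_wrt (\<ge>) B \<and>
     (\<forall>j. length a - 1 \<le> j \<and> j < n \<longrightarrow> B ! j = B ! (length a - 1)) \<and>
     max (a ! 0) (B ! 0) \<le> q \<and>
     (\<Sum>i<length a. min (a ! i) (B ! i)) = k"

definition dominates :: "nat list \<Rightarrow> nat list \<Rightarrow> bool" where
  "dominates B' B \<longleftrightarrow> (\<forall>i<length B. B ! i \<le> B' ! i) \<and> sum_list B < sum_list B'"

definition maximal_feasible :: "nat \<Rightarrow> nat \<Rightarrow> nat list \<Rightarrow> nat \<Rightarrow> nat list set" where
  "maximal_feasible q k a n =
     {B. feasible q k a n B \<and> \<not> (\<exists>B'. feasible q k a n B' \<and> dominates B' B)}"

definition t_index :: "nat list \<Rightarrow> nat list \<Rightarrow> nat" where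
  "t_index a B = (LEAST t. 1 \<le> t \<and> t \<le> length a \<and> B ! (t - 1) < a ! (t - 1))"

definition seq_value :: "nat \<Rightarrow> nat \<Rightarrow> nat list \<Rightarrow> nat list \<Rightarrow> nat" where
  "seq_value n q a B =
     (let s = length a; t = t_index a B in
       q * (t - 1) + (\<Sum>i = t..s. B ! (i - 1)) + (n - s) * B ! (s - 1))"

end

theory Submission
  imports Defs "HOL-Combinatorics.Permutations"
begin


lemma card_classes:
  assumes "X \<subseteq> sigma_vertices n q"
  shows "card X = (\<Sum>i\<in>{1..n}. card (X \<inter> vclass q i))"
proof -
  have eq: "X = (\<Union>i\<in>{1..n}. X \<inter> vclass q i)"
    using assms by (auto simp: sigma_vertices_def vclass_def)
  have fin: "\<forall>i\<in>{1..n}. finite (X \<inter> vclass q i)"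
    by (auto simp: vclass_def)
  have disj: "\<forall>i\<in>{1..n}. \<forall>j\<in>{1..n}. i \<noteq> j \<longrightarrow> (X \<inter> vclass q i) \<inter> (X \<inter> vclass q j) = {}"
    by (auto simp: vclass_def)
  have "card X = card (\<Union>i\<in>{1..n}. X \<inter> vclass q i)" using eq by simp
  also have "\<dots> = (\<Sum>i\<in>{1..n}. card (X \<inter> vclass q i))"
    by (rule card_UN_disjoint) (use fin disj in auto)
  finally show ?thesis .
qed

lemma card_inter_min:
  fixes X Y :: "nat set"
  assumes "finite X" "finite Y" "\<forall>x\<in>X. \<forall>y<x. y\<in>X" "\<forall>x\<in>Y. \<forall>y<x. y\<in>Y"
  shows "card (X \<inter> Y) = min (card X) (card Y)"
proof -
  have "X \<subseteq> Y \<or> Y \<subseteq> X"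
    using assms(3,4) by (metis linorder_neqE_nat subsetI)
  then show ?thesis
  proof
    assume "X \<subseteq> Y" then show ?thesis using card_mono[OF assms(2)] by (simp add: Int_absorb2)
  next
    assume "Y \<subseteq> X" then show ?thesis using card_mono[OF assms(1)] by (simp add: Int_absorb1)
  qed
qed

lemma min_layer:
  fixes x y q :: nat
  assumes "y \<le> q"
  shows "min x y = card {h\<in>{..<q}. h < x \<and> h < y}"
proof -
  have "{h\<in>{..<q}. h < x \<and> h < y} = {..<min x y}" using assms by auto
  then show ?thesis by simp
qed

lemma layer_sum:
  fixes f g :: "'a \<Rightarrow> nat"
  assumes "finite I" "\<forall>i\<in>I. g i \<le> q"
  shows "(\<Sum>i\<in>I. min (f i) (g i)) = (\<Sum>h<q. card {i\<in>I. h < f i \<and> h < g i})"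
proof -
  have "(\<Sum>i\<in>I. min (f i) (g i)) = (\<Sum>i\<in>I. \<Sum>h<q. if h < f i \<and> h < g i then 1 else 0)"
  proof (rule sum.cong[OF refl])
    fix i assume "i \<in> I"
    then have "min (f i) (g i) = card {h\<in>{..<q}. h < f i \<and> h < g i}"
      using assms(2) min_layer by blast
    also have "\<dots> = (\<Sum>h\<in>{h\<in>{..<q}. h < f i \<and> h < g i}. 1)" by simp
    also have "\<dots> = (\<Sum>h<q. if h < f i \<and> h < g i then 1 else 0)"
      by (subst sum.inter_filter) auto
    finally show "min (f i) (g i) = (\<Sum>h<q. if h < f i \<and> h < g i then 1 else 0)" .
  qed
  also have "\<dots> = (\<Sum>h<q. \<Sum>i\<in>I. if h < f i \<and> h < g i then 1 else 0)"
    by (rule sum.swap)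
  also have "\<dots> = (\<Sum>h<q. card {i\<in>I. h < f i \<and> h < g i})"
  proof (rule sum.cong[OF refl])
    fix h
    show "(\<Sum>i\<in>I. if h < f i \<and> h < g i then 1 else 0) = card {i\<in>I. h < f i \<and> h < g i}"
      using sum.inter_filter[OF assms(1), of "\<lambda>_. 1::nat" "\<lambda>i. h < f i \<and> h < g i"] by simp
  qed
  finally show ?thesis .
qed

lemma count_above:
  fixes e :: "nat \<Rightarrow> nat" and n h :: nat
  assumes "filter_mset (\<lambda>x. x\<noteq>0) (image_mset e (mset_set {1..n})) = mset a"
  shows "card {i\<in>{1..n}. h < e i} = card {j. j < length a \<and> h < a!j}"
proof -
  have "card {i\<in>{1..n}. h < e i} = size (image_mset e (filter_mset (\<lambda>i. h < e i) (mset_set {1..n})))"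
  proof -
    have 1: "filter_mset (\<lambda>i. h < e i) (mset_set {1..n}) = mset_set {i\<in>{1..n}. h < e i}" by simp
    show ?thesis by (simp only: size_image_mset 1 size_mset_set)
  qed
  also have "\<dots> = size (filter_mset (\<lambda>x. h < x) (image_mset e (mset_set {1..n})))"
    by (simp only: image_mset_filter_mset_swap[of e "\<lambda>x. h < x", symmetric])
  also have "\<dots> = size (filter_mset (\<lambda>x. h < x) (filter_mset (\<lambda>x. x\<noteq>0) (image_mset e (mset_set {1..n}))))"
  proof -
    have "\<And>x. (x \<noteq> 0 \<and> h < x) = (h < x)" by auto
    then show ?thesis by (simp only: filter_filter_mset)
  qed
  also have "\<dots> = length (filter (\<lambda>x. h < x) a)"
    using assms by (simp flip: mset_filter)
  also have "\<dots> = card {j. j < length a \<and> h < a!j}"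
    by (rule length_filter_conv_card)
  finally show ?thesis .
qed



lemma layer_bound:
  fixes e cc :: "nat \<Rightarrow> nat" and n q :: nat and a :: "nat list"
  assumes hyp: "filter_mset (\<lambda>x. x\<noteq>0) (image_mset e (mset_set {1..n})) = mset a"
    and sa: "sorted_wrt (\<ge>) a" and sn: "length a \<le> n"
    and cm: "\<forall>i j. i \<le> j \<and> j < n \<longrightarrow> cc j \<le> cc i" and cq: "\<forall>j<n. cc j \<le> q"
  shows "(\<Sum>i\<in>{1..n}. min (e i) (cc (i-1))) \<le> (\<Sum>j<length a. min (a!j) (cc j))"
proof -
  have L: "(\<Sum>i\<in>{1..n}. min (e i) (cc (i-1))) = (\<Sum>h<q. card {i\<in>{1..n}. h < e i \<and> h < cc (i-1)})"
    by (rule layer_sum) (use cq in auto)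
  have R: "(\<Sum>j<length a. min (a!j) (cc j)) = (\<Sum>h<q. card {j\<in>{..<length a}. h < a!j \<and> h < cc j})"
    by (rule layer_sum) (use cq sn in auto)
  have "(\<Sum>h<q. card {i\<in>{1..n}. h < e i \<and> h < cc (i-1)}) \<le> (\<Sum>h<q. card {j\<in>{..<length a}. h < a!j \<and> h < cc j})"
  proof (rule sum_mono)
    fix h
    define X where "X = {j. j < length a \<and> h < a!j}"
    define Y where "Y = {j. j < n \<and> h < cc j}"
    have "card {i\<in>{1..n}. h < e i \<and> h < cc (i-1)} \<le> card {i\<in>{1..n}. h < e i}"
      by (rule card_mono) auto
    also have "\<dots> = card X" unfolding X_def by (rule count_above[OF hyp])
    finally have c1: "card {i\<in>{1..n}. h < e i \<and> h < cc (i-1)} \<le> card X" .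
    have "card {i\<in>{1..n}. h < e i \<and> h < cc (i-1)} \<le> card {i\<in>{1..n}. h < cc (i-1)}"
      by (rule card_mono) auto
    also have "{i\<in>{1..n}. h < cc (i-1)} = Suc ` Y"
    proof
      show "{i\<in>{1..n}. h < cc (i-1)} \<subseteq> Suc ` Y"
      proof
        fix i assume "i \<in> {i\<in>{1..n}. h < cc (i-1)}"
        then have "i - 1 \<in> Y" "i = Suc (i - 1)" unfolding Y_def by auto
        then show "i \<in> Suc ` Y" by blast
      qed
      show "Suc ` Y \<subseteq> {i\<in>{1..n}. h < cc (i-1)}" unfolding Y_def by auto
    qed
    also have "card (Suc ` Y) = card Y" by (simp add: card_image)
    finally have c2: "card {i\<in>{1..n}. h < e i \<and> h < cc (i-1)} \<le> card Y" .
    have "card (X \<inter> Y) = min (card X) (card Y)"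
    proof (rule card_inter_min)
      show "finite X" unfolding X_def by simp
      show "finite Y" unfolding Y_def by simp
      show "\<forall>x\<in>X. \<forall>y<x. y \<in> X"
        unfolding X_def using sa by (auto simp: sorted_wrt_iff_nth_less) (meson order.strict_trans2)
      show "\<forall>x\<in>Y. \<forall>y<x. y \<in> Y"
        unfolding Y_def using cm by auto (meson less_imp_le order.strict_trans2)
    qed
    moreover have "X \<inter> Y = {j\<in>{..<length a}. h < a!j \<and> h < cc j}"
      unfolding X_def Y_def using sn by auto
    ultimately show "card {i\<in>{1..n}. h < e i \<and> h < cc (i-1)} \<le> card {j\<in>{..<length a}. h < a!j \<and> h < cc j}"
      using c1 c2 by simp
  qed
  then show ?thesis using L R by simp
qed



definition summin :: "nat list \<Rightarrow> nat list \<Rightarrow> nat" where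
  "summin a B = (\<Sum>i<length a. min (a!i) (B!i))"

definition prefeas :: "nat \<Rightarrow> nat list \<Rightarrow> nat \<Rightarrow> nat list \<Rightarrow> bool" where
  "prefeas q a n B \<longleftrightarrow> length B = n \<and> sorted_wrt (\<ge>) B \<and>
     (\<forall>j. length a - 1 \<le> j \<and> j < n \<longrightarrow> B ! j = B ! (length a - 1)) \<and> B ! 0 \<le> q"

lemma feasible_iff: "a!0 \<le> q \<Longrightarrow> feasible q k a n B \<longleftrightarrow> prefeas q a n B \<and> summin a B = k"
  unfolding feasible_def prefeas_def summin_def by auto

lemma prefeas_mono: "prefeas q a n B \<Longrightarrow> i \<le> j \<Longrightarrow> j < n \<Longrightarrow> B!j \<le> B!i"
proof -
  assume p: "prefeas q a n B" and ij: "i \<le> j" and jn: "j < n"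
  have s: "sorted_wrt (\<ge>) B" and l: "length B = n" using p unfolding prefeas_def by auto
  show "B!j \<le> B!i"
  proof (cases "i = j")
    case False
    then have "i < j" using ij by simp
    then show ?thesis using sorted_wrt_nth_less[OF s _ ] jn l by simp
  qed simp
qed

lemma prefeas_le_q: "prefeas q a n B \<Longrightarrow> i < n \<Longrightarrow> B!i \<le> q"
proof -
  assume p: "prefeas q a n B" and i: "i < n"
  have "B!i \<le> B!0" by (rule prefeas_mono[OF p]) (use i in simp_all)
  moreover have "B!0 \<le> q" using p unfolding prefeas_def by blast
  ultimately show ?thesis by simp
qed

lemma sum_list_nth: "sum_list a = (\<Sum>i<length a. a!i)"
  by (simp add: sum_list_sum_nth atLeast0LessThan)

lemma exists_deficit:
  assumes "summin a B < sum_list a"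
  shows "\<exists>j<length a. B!j < a!j"
proof (rule ccontr)
  assume "\<not> ?thesis"
  then have "\<forall>j<length a. min (a!j) (B!j) = a!j" by auto
  then have "summin a B = sum_list a" unfolding summin_def sum_list_nth by simp
  then show False using assms by simp
qed

lemma t_props:
  assumes "summin a B < sum_list a"
  defines "t \<equiv> t_index a B"
  shows "1 \<le> t" "t \<le> length a" "B!(t-1) < a!(t-1)" "\<forall>i. i < t - 1 \<longrightarrow> a!i \<le> B!i"
proof -
  obtain j where j: "j < length a" "B!j < a!j" using exists_deficit[OF assms(1)] by blast
  let ?P = "\<lambda>t. 1 \<le> t \<and> t \<le> length a \<and> B ! (t - 1) < a ! (t - 1)"
  have Pj: "?P (Suc j)" using j by simp
  have Pt: "?P t" unfolding t_def t_index_def by (rule LeastI[of ?P, OF Pj])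
  then show "1 \<le> t" "t \<le> length a" "B!(t-1) < a!(t-1)" by auto
  show "\<forall>i. i < t - 1 \<longrightarrow> a!i \<le> B!i"
  proof (intro allI impI)
    fix i assume i: "i < t - 1"
    show "a!i \<le> B!i"
    proof (rule ccontr)
      assume "\<not> a!i \<le> B!i"
      then have "?P (Suc i)" using i Pt by auto
      then have "t \<le> Suc i" unfolding t_def t_index_def by (rule Least_le)
      then show False using i by simp
    qed
  qed
qed

lemma seq_value_alt:
  assumes "summin a B < sum_list a"
  shows "seq_value n q a B = (\<Sum>i<length a. if i < t_index a B - 1 then q else B!i)
            + (n - length a) * B!(length a - 1)"
proof -
  define t where "t = t_index a B"
  define s where "s = length a"
  have t1: "1 \<le> t" and ts: "t \<le> s" using t_props[OF assms] unfolding t_def s_def by auto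
  have split: "{..<s} = {..<t-1} \<union> {t-1..<s}" using t1 ts by auto
  have "(\<Sum>i<s. if i < t - 1 then q else B!i) = (\<Sum>i<t-1. if i < t - 1 then q else B!i) + (\<Sum>i\<in>{t-1..<s}. if i < t - 1 then q else B!i)"
    unfolding split by (rule sum.union_disjoint) auto
  also have "\<dots> = q * (t - 1) + (\<Sum>i\<in>{t-1..<s}. B!i)" by simp
  finally have e1: "(\<Sum>i<s. if i < t - 1 then q else B!i) = q * (t - 1) + (\<Sum>i\<in>{t-1..<s}. B!i)" .
  obtain t0 where t0: "t = Suc t0" using t1 by (cases t) auto
  obtain s0 where s0: "s = Suc s0" using t1 ts by (cases s) auto
  have "(\<Sum>i = t..s. B ! (i - 1)) = (\<Sum>i = t0..s0. B ! i)"
    unfolding t0 s0 sum.shift_bounds_cl_Suc_ivl by simp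
  also have "{t0..s0} = {t-1..<s}" using t0 s0 by auto
  finally have e2: "(\<Sum>i = t..s. B ! (i - 1)) = (\<Sum>i\<in>{t-1..<s}. B!i)" .
  show ?thesis unfolding seq_value_def Let_def
    using e1 e2 unfolding t_def s_def by simp
qed

lemma seq_mono:
  assumes "summin a B < sum_list a" "summin a B' < sum_list a"
    and "\<forall>i<length a. B!i \<le> q" "\<forall>i<n. B!i \<le> B'!i" "length a \<le> n" "a \<noteq> []"
  shows "seq_value n q a B \<le> seq_value n q a B'"
proof -
  define t where "t = t_index a B"
  define t' where "t' = t_index a B'"
  note tp = t_props[OF assms(1), folded t_def]
  note tp' = t_props[OF assms(2), folded t'_def]
  have "t' - 1 < n" using tp' assms(5) by linarith
  then have "B!(t'-1) \<le> B'!(t'-1)" using assms(4) by blast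
  then have "B!(t'-1) < a!(t'-1)" using tp'(3) by linarith
  then have "t \<le> t'" unfolding t_def t_index_def
    by (intro Least_le) (use tp' in auto)
  have "(\<Sum>i<length a. if i < t - 1 then q else B!i) \<le> (\<Sum>i<length a. if i < t' - 1 then q else B'!i)"
  proof (rule sum_mono)
    fix i assume i: "i \<in> {..<length a}"
    show "(if i < t - 1 then q else B!i) \<le> (if i < t' - 1 then q else B'!i)"
      using i assms(3,4,5) \<open>t \<le> t'\<close> by auto
  qed
  moreover have "length a - 1 < n" using assms(5,6) by (cases a) auto
  then have "B!(length a - 1) \<le> B'!(length a - 1)" using assms(4) by blast
  ultimately show ?thesis
    unfolding seq_value_alt[OF assms(1)] seq_value_alt[OF assms(2)] t_def[symmetric] t'_def[symmetric]
    by (simp add: add_mono)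
qed



lemma raise:
  assumes an: "a \<noteq> []" "length a \<le> n" and sa: "sorted_wrt (\<ge>) a" and aq: "a!0 \<le> q"
    and kr: "k < sum_list a"
  shows "prefeas q a n B \<Longrightarrow> summin a B \<le> k \<Longrightarrow>
     \<exists>B'. prefeas q a n B' \<and> summin a B' = k \<and> (\<forall>i<n. B!i \<le> B'!i)"
proof (induction "n*q - (\<Sum>i<n. B!i)" arbitrary: B rule: less_induct)
  case (less B)
  note pB = less.prems(1)
  show ?case
  proof (cases "summin a B = k")
    case True
    then show ?thesis using pB by blast
  next
    case False
    define s where "s = length a"
    have s1: "1 \<le> s" using an unfolding s_def by (cases a) auto
    have sn: "s \<le> n" using an unfolding s_def by simp
    have lB: "length B = n" using pB unfolding prefeas_def by blast
    have tail: "\<And>j. s - 1 \<le> j \<Longrightarrow> j < n \<Longrightarrow> B!j = B!(s-1)"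
      using pB unfolding prefeas_def s_def by blast
    have lt: "summin a B < sum_list a" using False less.prems(2) kr by simp
    obtain j where j: "j < s" "B!j < a!j" using exists_deficit[OF lt] unfolding s_def by blast
    have "a!j \<le> a!0"
    proof (cases "j = 0")
      case False
      then show ?thesis using sorted_wrt_nth_less[OF sa, of 0 j] j(1) unfolding s_def by simp
    qed simp
    then have Bjq: "B!j < q" using j aq by simp
    define i0 where "i0 = (LEAST i. B!i < q)"
    have Bi0: "B!i0 < q" unfolding i0_def by (rule LeastI[of "\<lambda>i. B!i < q", OF Bjq])
    have i0j: "i0 \<le> j" unfolding i0_def by (rule Least_le) (rule Bjq)
    have i0s: "i0 \<le> s - 1" using i0j j by simp
    have below: "\<And>i. i < i0 \<Longrightarrow> B!i = q"
    proof -
      fix i assume "i < i0"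
      then have "\<not> B!i < q" unfolding i0_def by (rule not_less_Least)
      moreover have "B!i \<le> q" using prefeas_le_q[OF pB] \<open>i < i0\<close> i0j j sn by simp
      ultimately show "B!i = q" by simp
    qed
    define bump where "bump i = (i = i0 \<or> (s-1 \<le> i0 \<and> s-1 \<le> i))" for i
    define g where "g i = B!i + (if bump i then 1 else 0)" for i
    define B1 where "B1 = map g [0..<n]"
    have B1n: "\<And>i. i < n \<Longrightarrow> B1!i = g i" unfolding B1_def by simp
    have lB1: "length B1 = n" unfolding B1_def by simp
    have gmono: "g jj \<le> g ii" if "ii < jj" "jj < n" for ii jj
    proof -
      have BB: "B!jj \<le> B!ii" using prefeas_mono[OF pB] that by simp
      show ?thesis
      proof (cases "bump jj \<and> \<not> bump ii")
        case True
        show ?thesis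
        proof (cases "jj = i0")
          case True
          then have "B!ii = q" using below that by simp
          then show ?thesis unfolding g_def using Bi0 True by simp
        next
          case False
          then have "s-1 \<le> i0" "s-1 \<le> jj" using \<open>bump jj \<and> \<not> bump ii\<close> unfolding bump_def by auto
          then have "i0 = s - 1" using i0s by simp
          have "ii < i0" using \<open>bump jj \<and> \<not> bump ii\<close> \<open>i0 = s - 1\<close> unfolding bump_def by auto
          then have "B!ii = q" using below by simp
          moreover have "B!jj = B!i0" using tail[OF \<open>s-1 \<le> jj\<close> that(2)] \<open>i0 = s - 1\<close> by simp
          ultimately show ?thesis unfolding g_def using Bi0 by simp
        qed
      next
        case False
        then show ?thesis unfolding g_def using BB by auto
      qed
    qed
    have pB1: "prefeas q a n B1"
      unfolding prefeas_def
    proof (intro conjI allI impI)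
      show "length B1 = n" by (rule lB1)
      show "sorted_wrt (\<ge>) B1" unfolding sorted_wrt_iff_nth_less lB1
        using gmono B1n by simp
      fix jj assume jj: "length a - 1 \<le> jj \<and> jj < n"
      then have "bump jj = bump (s - 1)" unfolding bump_def s_def using i0s s_def by auto
      then show "B1 ! jj = B1 ! (length a - 1)"
      proof -
        have e: "B!jj = B!(s-1)" using tail[of jj] jj unfolding s_def by simp
        have "s - 1 < n" using sn s1 by simp
        then show ?thesis using B1n[of jj] B1n[of "s-1"] jj e \<open>bump jj = bump (s - 1)\<close>
          unfolding g_def s_def by simp
      qed
    next
      have "bump 0 \<Longrightarrow> i0 = 0" unfolding bump_def using i0s by auto
      then have "g 0 \<le> q" unfolding g_def using Bi0 prefeas_le_q[OF pB, of 0] sn s1 by auto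
      then show "B1 ! 0 \<le> q" using B1n sn s1 by simp
    qed
    have i0n: "i0 < n" using i0s s1 sn by simp
    have "summin a B1 \<le> (\<Sum>i<s. min (a!i) (B!i) + (if i = i0 then 1 else 0))"
      unfolding summin_def s_def[symmetric]
    proof (rule sum_mono)
      fix i assume "i \<in> {..<s}"
      then have "i < n" "bump i \<Longrightarrow> i = i0" using sn i0s unfolding bump_def by auto
      then have e: "B1!i = g i" using B1n by blast
      show "min (a!i) (B1!i) \<le> min (a!i) (B!i) + (if i = i0 then 1 else 0)"
      proof (cases "bump i")
        case True
        then show ?thesis unfolding e g_def using \<open>bump i \<Longrightarrow> i = i0\<close> by simp
      next
        case False
        then show ?thesis unfolding e g_def by simp
      qed
    qed
    also have "\<dots> = summin a B + 1"
      unfolding sum.distrib summin_def s_def[symmetric] using i0s s1 by simp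
    finally have sm1: "summin a B1 \<le> k" using lt False less.prems(2) by simp
    have "(\<Sum>i<n. B1!i) = (\<Sum>i<n. B!i) + (\<Sum>i<n. if bump i then 1 else 0)"
      using B1n unfolding g_def by (simp add: sum.distrib)
    moreover have "(\<Sum>i<n. if bump i then 1 else (0::nat)) \<ge> 1"
    proof -
      have "(\<Sum>i<n. if bump i then 1 else (0::nat)) \<ge> (\<Sum>i\<in>{i0}. if bump i then 1 else (0::nat))"
        by (rule sum_mono2) (use i0n in auto)
      then show ?thesis unfolding bump_def by simp
    qed
    moreover have "(\<Sum>i<n. B1!i) \<le> n * q"
    proof -
      have "(\<Sum>i<n. B1!i) \<le> (\<Sum>i<n. q)" by (rule sum_mono) (use prefeas_le_q[OF pB1] in auto)
      then show ?thesis by simp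
    qed
    ultimately have dec: "n*q - (\<Sum>i<n. B1!i) < n*q - (\<Sum>i<n. B!i)" by linarith
    obtain B' where B': "prefeas q a n B'" "summin a B' = k" "\<forall>i<n. B1!i \<le> B'!i"
      using less.hyps[OF dec pB1 sm1] by blast
    have "\<forall>i<n. B!i \<le> B'!i"
    proof (intro allI impI)
      fix i assume "i < n"
      then have "B!i \<le> B1!i" using B1n unfolding g_def by simp
      then show "B!i \<le> B'!i" using B'(3) \<open>i < n\<close> by (meson le_trans)
    qed
    then show ?thesis using B' by blast
  qed
qed



lemma sum_list_le_nq: "prefeas q a n B \<Longrightarrow> sum_list B \<le> n * q"
proof -
  assume p: "prefeas q a n B"
  then have l: "length B = n" unfolding prefeas_def by blast
  have "sum_list B = (\<Sum>i<n. B!i)" using sum_list_nth[of B] l by simp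
  also have "\<dots> \<le> (\<Sum>i<n. q)" by (rule sum_mono) (use prefeas_le_q[OF p] in auto)
  finally show ?thesis by simp
qed

lemma max_exists:
  assumes aq: "a!0 \<le> q" and fB: "feasible q k a n B"
  shows "\<exists>B'\<in>maximal_feasible q k a n. \<forall>i<n. B!i \<le> B'!i"
proof -
  let ?P = "\<lambda>B'. feasible q k a n B' \<and> (\<forall>i<n. B!i \<le> B'!i)"
  have PB: "?P B" using fB by simp
  have bnd: "\<forall>y. ?P y \<longrightarrow> sum_list y < n * q + 1"
    using sum_list_le_nq feasible_iff[OF aq] by (metis le_imp_less_Suc Suc_eq_plus1)
  obtain x where x: "?P x" "\<forall>y. ?P y \<longrightarrow> sum_list y \<le> sum_list x"
    using ex_has_greatest_nat[OF PB bnd] by blast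
  have lx: "length x = n" using x(1) unfolding feasible_def by blast
  have "x \<in> maximal_feasible q k a n"
    unfolding maximal_feasible_def
  proof (intro CollectI conjI notI)
    show "feasible q k a n x" using x(1) by blast
    assume "\<exists>B'. feasible q k a n B' \<and> dominates B' x"
    then obtain B' where B': "feasible q k a n B'" "dominates B' x" by blast
    have "\<forall>i<n. B!i \<le> B'!i"
    proof (intro allI impI)
      fix i assume "i < n"
      then show "B!i \<le> B'!i" using x(1) B'(2) lx unfolding dominates_def by (meson le_trans)
    qed
    then have "sum_list B' \<le> sum_list x" using x(2) B'(1) by blast
    then show False using B'(2) unfolding dominates_def by simp
  qed
  then show ?thesis using x(1) by blast
qed

lemma finite_maximal:
  assumes aq: "a!0 \<le> q"
  shows "finite (maximal_feasible q k a n)"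
proof (rule finite_subset)
  show "maximal_feasible q k a n \<subseteq> {xs. set xs \<subseteq> {..q} \<and> length xs = n}"
  proof
    fix B assume "B \<in> maximal_feasible q k a n"
    then have p: "prefeas q a n B" using feasible_iff[OF aq] unfolding maximal_feasible_def by blast
    then have l: "length B = n" unfolding prefeas_def by blast
    have "set B \<subseteq> {..q}"
    proof
      fix x assume "x \<in> set B"
      then obtain i where "i < n" "B!i = x" using l by (auto simp: in_set_conv_nth)
      then show "x \<in> {..q}" using prefeas_le_q[OF p] by auto
    qed
    then show "B \<in> {xs. set xs \<subseteq> {..q} \<and> length xs = n}" using l by simp
  qed
  show "finite {xs. set xs \<subseteq> {..q} \<and> length xs = n}" by (rule finite_lists_length_eq) simp
qed

lemma feasible_exists:
  assumes an: "a \<noteq> []" "length a \<le> n" and sa: "sorted_wrt (\<ge>) a" and aq: "a!0 \<le> q"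
    and kr: "k < sum_list a"
  shows "\<exists>B. feasible q k a n B"
proof -
  have "prefeas q a n (replicate n 0)"
  proof -
    have "0 < n" using an by (cases a) auto
    then show ?thesis unfolding prefeas_def by (simp add: sorted_wrt_iff_nth_less)
  qed
  moreover have "summin a (replicate n 0) \<le> k"
  proof -
    have "summin a (replicate n 0) = 0" unfolding summin_def
      by (rule sum.neutral) (use an in auto)
    then show ?thesis by simp
  qed
  ultimately obtain B' where "prefeas q a n B'" "summin a B' = k"
    using raise[OF an sa aq kr] by blast
  then show ?thesis using feasible_iff[OF aq] by blast
qed



lemma sum_shift1:
  fixes n :: nat and f :: "nat \<Rightarrow> nat"
  shows "(\<Sum>i\<in>{1..n}. f (i - 1)) = (\<Sum>j<n. (f j :: nat))"
proof -
  have "(\<Sum>i\<in>{1..n}. f (i - 1)) = (\<Sum>i\<in>Suc ` {..<n}. f (i - 1))" by (simp add: image_Suc_lessThan)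
  also have "\<dots> = (\<Sum>j<n. f j)" by (simp add: sum.reindex)
  finally show ?thesis .
qed

lemma lower:
  assumes an: "a \<noteq> []" "length a \<le> n" and sa: "sorted_wrt (\<ge>) a" and aq: "a!0 \<le> q"
    and kr: "k < sum_list a" and fB: "feasible q k a n B"
  shows "\<exists>S. S \<subseteq> sigma_vertices n q \<and> k_independent (sigma_edges n q a) k S
           \<and> card S = seq_value n q a B"
proof -
  define s where "s = length a"
  have s1: "1 \<le> s" using an unfolding s_def by (cases a) auto
  have sn: "s \<le> n" using an unfolding s_def by simp
  have pB: "prefeas q a n B" and smB: "summin a B = k" using fB feasible_iff[OF aq] by auto
  have lt: "summin a B < sum_list a" using smB kr by simp
  define t where "t = t_index a B"
  note tp = t_props[OF lt, folded t_def]
  have tail: "\<And>j. s - 1 \<le> j \<Longrightarrow> j < n \<Longrightarrow> B!j = B!(s-1)"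
    using pB unfolding prefeas_def s_def by blast
  have aleq: "\<And>j. j < s \<Longrightarrow> a!j \<le> q"
  proof -
    fix j assume "j < s"
    have "a!j \<le> a!0"
    proof (cases "j = 0")
      case False
      then show ?thesis using sorted_wrt_nth_less[OF sa, of 0 j] \<open>j < s\<close> unfolding s_def by simp
    qed simp
    then show "a!j \<le> q" using aq by simp
  qed
  define cc where "cc j = (if j < t - 1 then q else B!j)" for j
  have ccq: "\<forall>j<n. cc j \<le> q" unfolding cc_def using prefeas_le_q[OF pB] by auto
  have ccm: "\<forall>i j. i \<le> j \<and> j < n \<longrightarrow> cc j \<le> cc i"
  proof (intro allI impI)
    fix i j assume ij: "i \<le> j \<and> j < n"
    show "cc j \<le> cc i"
    proof (cases "i < t - 1")
      case True
      then show ?thesis using ccq ij unfolding cc_def by auto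
    next
      case False
      then have "\<not> j < t - 1" using ij by simp
      then show ?thesis using False prefeas_mono[OF pB] ij unfolding cc_def by simp
    qed
  qed
  define S where "S = {(i,x). i \<in> {1..n} \<and> x < cc (i-1)}"
  have SV: "S \<subseteq> sigma_vertices n q"
  proof
    fix z assume "z \<in> S"
    then obtain i x where z: "z = (i, x)" "i \<in> {1..n}" "x < cc (i-1)" unfolding S_def by blast
    then have "cc (i-1) \<le> q" using ccq by auto
    then show "z \<in> sigma_vertices n q" using z unfolding sigma_vertices_def by auto
  qed
  have Scl: "S \<inter> vclass q i = {i} \<times> {..<cc (i-1)}" if "i \<in> {1..n}" for i
  proof -
    have "cc (i-1) \<le> q" using ccq that by auto
    then show ?thesis unfolding S_def vclass_def using that by auto
  qed
  have "card S = (\<Sum>i\<in>{1..n}. card (S \<inter> vclass q i))" by (rule card_classes[OF SV])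
  also have "\<dots> = (\<Sum>i\<in>{1..n}. cc (i-1))"
    by (rule sum.cong[OF refl]) (simp add: Scl card_cartesian_product)
  also have "\<dots> = (\<Sum>j<n. cc j)" by (rule sum_shift1)
  also have "\<dots> = (\<Sum>j<s. cc j) + (\<Sum>j\<in>{s..<n}. cc j)"
  proof -
    have "{..<n} = {..<s} \<union> {s..<n}" using sn by auto
    moreover have "sum cc ({..<s} \<union> {s..<n}) = sum cc {..<s} + sum cc {s..<n}"
      by (rule sum.union_disjoint) auto
    ultimately show ?thesis by simp
  qed
  also have "(\<Sum>j\<in>{s..<n}. cc j) = (\<Sum>j\<in>{s..<n}. B!(s-1))"
  proof (rule sum.cong[OF refl])
    fix j assume j: "j \<in> {s..<n}"
    then have "\<not> j < t - 1" using tp(2) unfolding s_def by auto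
    then have "cc j = B!j" unfolding cc_def by simp
    also have "\<dots> = B!(s-1)" using j by (intro tail) auto
    finally show "cc j = B!(s-1)" .
  qed
  also have "\<dots> = (n - s) * B!(s-1)" by simp
  finally have cardS: "card S = seq_value n q a B"
    unfolding seq_value_alt[OF lt] t_def[symmetric] s_def[symmetric] cc_def by simp
  have "k_independent (sigma_edges n q a) k S"
    unfolding k_independent_def
  proof
    fix K assume "K \<in> sigma_edges n q a"
    then have KV: "K \<subseteq> sigma_vertices n q"
      and Km: "filter_mset (\<lambda>x. x \<noteq> 0) (image_mset (\<lambda>i. card (K \<inter> vclass q i)) (mset_set {1..n})) = mset a"
      unfolding sigma_edges_def by auto
    have KSV: "K \<inter> S \<subseteq> sigma_vertices n q" using KV by auto
    have "card (K \<inter> S) = (\<Sum>i\<in>{1..n}. card (K \<inter> S \<inter> vclass q i))" by (rule card_classes[OF KSV])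
    also have "\<dots> \<le> (\<Sum>i\<in>{1..n}. min (card (K \<inter> vclass q i)) (cc (i-1)))"
    proof (rule sum_mono)
      fix i assume i: "i \<in> {1..n}"
      have fin: "finite (vclass q i)" unfolding vclass_def by simp
      have "card (K \<inter> S \<inter> vclass q i) \<le> card (K \<inter> vclass q i)"
        by (rule card_mono) (use fin in auto)
      moreover have "card (K \<inter> S \<inter> vclass q i) \<le> card (S \<inter> vclass q i)"
        by (rule card_mono) (use fin in auto)
      ultimately show "card (K \<inter> S \<inter> vclass q i) \<le> min (card (K \<inter> vclass q i)) (cc (i-1))"
        using Scl[OF i] by (simp add: card_cartesian_product)
    qed
    also have "\<dots> \<le> (\<Sum>j<length a. min (a!j) (cc j))"
      by (rule layer_bound[OF Km sa an(2) ccm ccq])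
    also have "\<dots> = summin a B"
      unfolding summin_def
    proof (rule sum.cong[OF refl])
      fix j assume j: "j \<in> {..<length a}"
      show "min (a!j) (cc j) = min (a!j) (B!j)"
      proof (cases "j < t - 1")
        case True
        then have "a!j \<le> B!j" using tp(4) by blast
        moreover have "a!j \<le> q" using aleq j unfolding s_def by simp
        ultimately show ?thesis unfolding cc_def using True by simp
      next
        case False
        then show ?thesis unfolding cc_def by simp
      qed
    qed
    finally show "card (K \<inter> S) \<le> k" using smB by simp
  qed
  then show ?thesis using SV cardS by blast
qed



lemma vclass_card: "card (vclass q i) = q" unfolding vclass_def by (simp add: card_cartesian_product)

lemma vclass_fin: "finite (vclass q i)" unfolding vclass_def by simp

lemma vclass_disj: "i \<noteq> i' \<Longrightarrow> vclass q i \<inter> vclass q i' = {}" unfolding vclass_def by auto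

lemma edge_exists:
  fixes I :: "nat \<Rightarrow> nat"
  assumes SV: "S \<subseteq> sigma_vertices n q" and an: "length a \<le> n" and a1: "\<forall>x\<in>set a. 1 \<le> x"
    and aleq: "\<forall>j<length a. a!j \<le> q" and inj: "inj_on I {..<n}" and Ir: "I ` {..<n} = {1..n}"
  shows "\<exists>E \<in> sigma_edges n q a. card (E \<inter> S) = (\<Sum>j<length a. min (a!j) (card (S \<inter> vclass q (I j))))"
proof -
  define s where "s = length a"
  define X where "X j = S \<inter> vclass q (I j)" for j
  define Y where "Y j = vclass q (I j) - S" for j
  define m where "m j = min (a!j) (card (X j))" for j
  have cX: "card (X j) \<le> q" for j unfolding X_def
    using card_mono[OF vclass_fin, of "S \<inter> vclass q (I j)" q "I j"] vclass_card by auto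
  have cY: "card (Y j) = q - card (X j)" for j
  proof -
    have "Y j = vclass q (I j) - X j" unfolding X_def Y_def by auto
    then show ?thesis using card_Diff_subset[of "X j" "vclass q (I j)"] vclass_fin vclass_card
      unfolding X_def by (simp add: Int_lower2 card_Diff_subset_Int inf_commute)
  qed
  have "\<forall>j. \<exists>A. j < s \<longrightarrow> A \<subseteq> X j \<and> card A = m j \<and> finite A"
  proof
    fix j
    have "m j \<le> card (X j)" unfolding m_def by simp
    then obtain A where "A \<subseteq> X j" "card A = m j" "finite A" by (rule obtain_subset_with_card_n)
    then show "\<exists>A. j < s \<longrightarrow> A \<subseteq> X j \<and> card A = m j \<and> finite A" by blast
  qed
  then obtain Af where Af: "\<And>j. j < s \<Longrightarrow> Af j \<subseteq> X j \<and> card (Af j) = m j \<and> finite (Af j)"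
    by metis
  have "\<forall>j. \<exists>C. j < s \<longrightarrow> C \<subseteq> Y j \<and> card C = a!j - m j \<and> finite C"
  proof
    fix j
    show "\<exists>C. j < s \<longrightarrow> C \<subseteq> Y j \<and> card C = a!j - m j \<and> finite C"
    proof (cases "j < s")
      case True
      have "a!j \<le> q" using aleq True unfolding s_def by simp
      then have "a!j - m j \<le> card (Y j)" unfolding cY m_def using cX[of j] by linarith
      then obtain C where "C \<subseteq> Y j" "card C = a!j - m j" "finite C" by (rule obtain_subset_with_card_n)
      then show ?thesis by blast
    qed simp
  qed
  then obtain Cf where Cf: "\<And>j. j < s \<Longrightarrow> Cf j \<subseteq> Y j \<and> card (Cf j) = a!j - m j \<and> finite (Cf j)"
    by metis
  define Ej where "Ej j = Af j \<union> Cf j" for j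
  define E where "E = (\<Union>j<s. Ej j)"
  have Ejv: "Ej j \<subseteq> vclass q (I j)" if "j < s" for j
    using Af[OF that] Cf[OF that] unfolding Ej_def X_def Y_def by auto
  have EjS: "Ej j \<inter> S = Af j" if "j < s" for j
    using Af[OF that] Cf[OF that] unfolding Ej_def X_def Y_def by auto
  have cEj: "card (Ej j) = a!j" if "j < s" for j
  proof -
    have "Af j \<inter> Cf j = {}" using Af[OF that] Cf[OF that] unfolding X_def Y_def by auto
    then have "card (Ej j) = card (Af j) + card (Cf j)"
      unfolding Ej_def using Af[OF that] Cf[OF that] by (simp add: card_Un_disjoint)
    then show ?thesis using Af[OF that] Cf[OF that] unfolding m_def by simp
  qed
  have finEj: "finite (Ej j)" if "j < s" for j using Af[OF that] Cf[OF that] unfolding Ej_def by simp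
  have Iin: "I j \<in> {1..n}" if "j < n" for j using Ir that by blast
  have Ineq: "I j \<noteq> I j'" if "j < n" "j' < n" "j \<noteq> j'" for j j'
    using inj that unfolding inj_on_def by blast
  have disj: "Ej j \<inter> Ej j' = {}" if "j < s" "j' < s" "j \<noteq> j'" for j j'
  proof -
    have "I j \<noteq> I j'" using Ineq that an unfolding s_def by simp
    then show ?thesis using Ejv[OF that(1)] Ejv[OF that(2)] vclass_disj by blast
  qed
  have EV: "E \<subseteq> sigma_vertices n q"
  proof
    fix z assume "z \<in> E"
    then obtain j where j: "j < s" "z \<in> Ej j" unfolding E_def by blast
    then have "z \<in> vclass q (I j)" using Ejv by blast
    moreover have "I j \<in> {1..n}" using Iin j an unfolding s_def by simp
    ultimately show "z \<in> sigma_vertices n q" unfolding vclass_def sigma_vertices_def by auto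
  qed
  have cardE: "card E = sum_list a"
  proof -
    have "card E = (\<Sum>j<s. card (Ej j))" unfolding E_def
      by (rule card_UN_disjoint) (use finEj disj in auto)
    also have "\<dots> = (\<Sum>j<s. a!j)" using cEj by simp
    finally show ?thesis unfolding s_def sum_list_nth by simp
  qed
  have cardES: "card (E \<inter> S) = (\<Sum>j<s. m j)"
  proof -
    have "E \<inter> S = (\<Union>j<s. Af j)" unfolding E_def using EjS by auto
    then have "card (E \<inter> S) = (\<Sum>j<s. card (Af j))"
      using card_UN_disjoint[of "{..<s}" Af] Af disj EjS by (simp, blast)
    also have "\<dots> = (\<Sum>j<s. m j)" using Af by simp
    finally show ?thesis .
  qed
  have EI: "card (E \<inter> vclass q (I j)) = (if j < s then a!j else 0)" if "j < n" for j
  proof -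
    have "E \<inter> vclass q (I j) = (if j < s then Ej j else {})"
    proof (cases "j < s")
      case True
      have "Ej j' \<inter> vclass q (I j) = {}" if "j' < s" "j' \<noteq> j" for j'
      proof -
        have "I j' \<noteq> I j" using Ineq \<open>j < n\<close> that an unfolding s_def by simp
        then show ?thesis using Ejv[OF that(1)] vclass_disj by blast
      qed
      then show ?thesis unfolding E_def using True Ejv[OF True] by auto
    next
      case False
      have "Ej j' \<inter> vclass q (I j) = {}" if "j' < s" for j'
      proof -
        have "I j' \<noteq> I j" using Ineq \<open>j < n\<close> that an False unfolding s_def by force
        then show ?thesis using Ejv[OF that(1)] vclass_disj by blast
      qed
      then show ?thesis unfolding E_def using False by auto
    qed
    then show ?thesis using cEj by simp
  qed
  define g where "g j = (if j < s then a!j else 0)" for j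
  have "image_mset (\<lambda>i. card (E \<inter> vclass q i)) (mset_set {1..n})
        = image_mset (\<lambda>i. card (E \<inter> vclass q i)) (image_mset I (mset_set {..<n}))"
    using image_mset_mset_set[OF inj] Ir by simp
  also have "\<dots> = image_mset g (mset_set {..<n})"
    unfolding multiset.map_comp using EI unfolding g_def
    by (intro image_mset_cong) auto
  also have "\<dots> = mset (map g [0..<n])" by (simp add: mset_set_upto_eq_mset_upto)
  finally have M1: "image_mset (\<lambda>i. card (E \<inter> vclass q i)) (mset_set {1..n}) = mset (map g [0..<n])" .
  have "[0..<n] = [0..<s] @ [s..<n]" using an upt_add_eq_append[of 0 s "n - s"] unfolding s_def by simp
  then have "filter (\<lambda>x. x \<noteq> 0) (map g [0..<n]) = filter (\<lambda>x. x \<noteq> 0) (map g [0..<s]) @ filter (\<lambda>x. x \<noteq> 0) (map g [s..<n])"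
    by simp
  also have "map g [0..<s] = a" unfolding g_def s_def by (rule nth_equalityI) auto
  also have "filter (\<lambda>x. x \<noteq> 0) a = a" by (rule filter_True) (use a1 in fastforce)
  also have "filter (\<lambda>x. x \<noteq> 0) (map g [s..<n]) = []" unfolding g_def by (simp add: filter_empty_conv)
  finally have "filter (\<lambda>x. x \<noteq> 0) (map g [0..<n]) = a" by simp
  then have "filter_mset (\<lambda>x. x \<noteq> 0) (image_mset (\<lambda>i. card (E \<inter> vclass q i)) (mset_set {1..n})) = mset a"
    unfolding M1 by (metis mset_filter)
  then have "E \<in> sigma_edges n q a" unfolding sigma_edges_def using EV cardE by simp
  then show ?thesis using cardES unfolding m_def X_def s_def by blast
qed



lemma upper:
  assumes an: "a \<noteq> []" "length a \<le> n" and sa: "sorted_wrt (\<ge>) a" and a1: "\<forall>x\<in>set a. 1 \<le> x"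
    and aq: "a!0 \<le> q" and kr: "k < sum_list a"
    and SV: "S \<subseteq> sigma_vertices n q" and kS: "k_independent (sigma_edges n q a) k S"
  shows "\<exists>B\<in>maximal_feasible q k a n. card S \<le> seq_value n q a B"
proof -
  define s where "s = length a"
  have s1: "1 \<le> s" using an unfolding s_def by (cases a) auto
  have sn: "s \<le> n" using an unfolding s_def by simp
  have aleq: "\<forall>j<length a. a!j \<le> q"
  proof (intro allI impI)
    fix j assume "j < length a"
    have "a!j \<le> a!0"
    proof (cases "j = 0")
      case False
      then show ?thesis using sorted_wrt_nth_less[OF sa, of 0 j] \<open>j < length a\<close> by simp
    qed simp
    then show "a!j \<le> q" using aq by simp
  qed
  define cnt where "cnt i = card (S \<inter> vclass q i)" for i
  have cntq: "cnt i \<le> q" for i unfolding cnt_def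
    using card_mono[OF vclass_fin, of "S \<inter> vclass q i" q i] vclass_card by auto
  define L where "L = map (\<lambda>j. cnt (Suc j)) [0..<n]"
  define Ls where "Ls = rev (sort L)"
  have "mset Ls = mset L" unfolding Ls_def by simp
  then obtain p where p: "p permutes {..<length L}" "permute_list p L = Ls"
    by (rule mset_eq_permutation)
  have lL: "length L = n" unfolding L_def by simp
  have pn: "p permutes {..<n}" using p(1) lL by simp
  define I where "I j = Suc (p j)" for j
  define d where "d j = cnt (I j)" for j
  have pin: "j < n \<Longrightarrow> p j < n" for j using permutes_in_image[OF pn] by simp
  have Lsn: "Ls!j = d j" if "j < n" for j
  proof -
    have "Ls!j = L!(p j)" using p permute_list_nth[OF p(1)] that lL by metis
    also have "\<dots> = d j" unfolding L_def d_def I_def using pin[OF that] by simp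
    finally show ?thesis .
  qed
  have sLs: "sorted_wrt (\<ge>) Ls" unfolding Ls_def sorted_wrt_rev by simp
  have lLs: "length Ls = n" unfolding Ls_def using lL by simp
  have dmono: "d j \<le> d i" if "i \<le> j" "j < n" for i j
  proof (cases "i = j")
    case False
    then have "i < j" using that by simp
    then have "Ls!j \<le> Ls!i" using sorted_wrt_nth_less[OF sLs] that lLs by simp
    then show ?thesis using Lsn that by simp
  qed simp
  have dq: "d j \<le> q" for j unfolding d_def by (rule cntq)
  have injI: "inj_on I {..<n}" unfolding I_def using permutes_inj_on[OF pn] by (simp add: inj_on_def)
  have IR: "I ` {..<n} = {1..n}"
  proof -
    have "I ` {..<n} = Suc ` (p ` {..<n})" unfolding I_def by auto
    also have "p ` {..<n} = {..<n}" by (rule permutes_image[OF pn])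
    finally show ?thesis by (simp add: image_Suc_lessThan)
  qed
  obtain E where E: "E \<in> sigma_edges n q a"
    "card (E \<inter> S) = (\<Sum>j<length a. min (a!j) (card (S \<inter> vclass q (I j))))"
    using edge_exists[OF SV an(2) a1 aleq injI IR] by blast
  have smd: "(\<Sum>j<s. min (a!j) (d j)) \<le> k"
    using E kS unfolding k_independent_def d_def cnt_def s_def by (metis Int_commute)
  define Bd where "Bd = map (\<lambda>j. d (min j (s-1))) [0..<n]"
  have Bdn: "Bd!j = d (min j (s-1))" if "j < n" for j unfolding Bd_def using that by simp
  have pBd: "prefeas q a n Bd"
    unfolding prefeas_def
  proof (intro conjI allI impI)
    show "length Bd = n" unfolding Bd_def by simp
    show "sorted_wrt (\<ge>) Bd" unfolding sorted_wrt_iff_nth_less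
    proof (intro allI impI)
      fix i j assume "i < j" "j < length Bd"
      then have "j < n" unfolding Bd_def by simp
      have "min j (s-1) < n" using \<open>j < n\<close> by simp
      then show "Bd!j \<le> Bd!i" using Bdn \<open>j < n\<close> \<open>i < j\<close> dmono[of "min i (s-1)" "min j (s-1)"] by simp
    qed
    fix j assume "length a - 1 \<le> j \<and> j < n"
    then show "Bd!j = Bd!(length a - 1)" using Bdn sn s1 unfolding s_def by simp
  next
    show "Bd!0 \<le> q" using Bdn[of 0] sn s1 dq by simp
  qed
  have smBd: "summin a Bd = (\<Sum>j<s. min (a!j) (d j))"
    unfolding summin_def s_def[symmetric]
    by (rule sum.cong[OF refl]) (use Bdn sn in auto)
  have smBdk: "summin a Bd \<le> k" using smBd smd by simp
  obtain B1 where B1: "prefeas q a n B1" "summin a B1 = k" "\<forall>i<n. Bd!i \<le> B1!i"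
    using raise[OF an sa aq kr pBd smBdk] by blast
  have fB1: "feasible q k a n B1" using B1 feasible_iff[OF aq] by blast
  obtain B2 where B2: "B2 \<in> maximal_feasible q k a n" "\<forall>i<n. B1!i \<le> B2!i"
    using max_exists[OF aq fB1] by blast
  have fB2: "feasible q k a n B2" using B2(1) unfolding maximal_feasible_def by blast
  have smB2: "summin a B2 = k" using fB2 feasible_iff[OF aq] by blast
  have cardS: "card S = (\<Sum>j<n. d j)"
  proof -
    have "card S = (\<Sum>i\<in>{1..n}. cnt i)" unfolding cnt_def by (rule card_classes[OF SV])
    also have "\<dots> = (\<Sum>i\<in>{1..n}. cnt (Suc (i - 1)))" by (rule sum.cong) auto
    also have "\<dots> = (\<Sum>j<n. cnt (Suc j))" by (rule sum_shift1)
    also have "\<dots> = (\<Sum>j\<in>p ` {..<n}. cnt (Suc j))" using permutes_image[OF pn] by simp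
    also have "\<dots> = (\<Sum>j<n. cnt (Suc (p j)))" by (simp add: sum.reindex[OF permutes_inj_on[OF pn]])
    finally show ?thesis unfolding d_def I_def .
  qed
  have ltBd: "summin a Bd < sum_list a" using smBdk kr by simp
  have "(\<Sum>j<n. d j) \<le> seq_value n q a Bd"
  proof -
    have "{..<n} = {..<s} \<union> {s..<n}" using sn by auto
    moreover have "sum d ({..<s} \<union> {s..<n}) = sum d {..<s} + sum d {s..<n}"
      by (rule sum.union_disjoint) auto
    ultimately have sp: "(\<Sum>j<n. d j) = (\<Sum>j<s. d j) + (\<Sum>j\<in>{s..<n}. d j)" by simp
    have "(\<Sum>j<s. d j) \<le> (\<Sum>j<s. if j < t_index a Bd - 1 then q else Bd!j)"
      by (rule sum_mono) (use Bdn sn dq in auto)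
    moreover have "(\<Sum>j\<in>{s..<n}. d j) \<le> (\<Sum>j\<in>{s..<n}. Bd!(s-1))"
      by (rule sum_mono) (use Bdn sn s1 dmono in auto)
    ultimately show ?thesis unfolding sp seq_value_alt[OF ltBd] s_def by simp
  qed
  also have "\<dots> \<le> seq_value n q a B2"
  proof (rule seq_mono[OF ltBd])
    show "summin a B2 < sum_list a" using smB2 kr by simp
    show "\<forall>i<length a. Bd!i \<le> q" using Bdn dq an(2) by simp
    show "\<forall>i<n. Bd!i \<le> B2!i" using B1(3) B2(2) by (meson le_trans)
  qed (use an in auto)
  finally show ?thesis using cardS B2(1) by auto
qed



theorem theorem2p8:
  fixes a :: "nat list" and n q k r s :: nat
  assumes "a \<noteq> []"
    and "sorted_wrt (\<ge>) a"
    and "\<forall>x\<in>set a. 1 \<le> x"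
    and "r = sum_list a"
    and "s = length a"
    and "s \<le> n"
    and "a ! 0 \<le> q"
    and "1 \<le> k" and "k \<le> r - 1"
  shows "alpha_k k (sigma_vertices n q) (sigma_edges n q a)
           = Max {seq_value n q a B | B. B \<in> maximal_feasible q k a n}"
proof -
  have an: "a \<noteq> []" "length a \<le> n" using assms by auto
  have sa: "sorted_wrt (\<ge>) a" and a1: "\<forall>x\<in>set a. 1 \<le> x" and aq: "a!0 \<le> q" using assms by auto
  have kr: "k < sum_list a" using assms by linarith
  define Vals where "Vals = {seq_value n q a B | B. B \<in> maximal_feasible q k a n}"
  have Vimg: "Vals = (\<lambda>B. seq_value n q a B) ` maximal_feasible q k a n" unfolding Vals_def by auto
  have finV: "finite Vals" unfolding Vimg using finite_maximal[OF aq] by simp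
  obtain B0 where "feasible q k a n B0" using feasible_exists[OF an sa aq kr] by blast
  then obtain B1 where "B1 \<in> maximal_feasible q k a n" using max_exists[OF aq] by blast
  then have neV: "Vals \<noteq> {}" unfolding Vimg by blast
  define R where "R = Max Vals"
  define A where "A = {card S | S. S \<subseteq> sigma_vertices n q \<and> k_independent (sigma_edges n q a) k S}"
  have finA: "finite A"
  proof -
    have "A \<subseteq> card ` Pow (sigma_vertices n q)" unfolding A_def by auto
    moreover have "finite (sigma_vertices n q)" unfolding sigma_vertices_def by simp
    ultimately show ?thesis using finite_subset by blast
  qed
  have "Max A = R"
  proof (rule Max_eqI[OF finA])
    fix y assume "y \<in> A"
    then obtain S where S: "y = card S" "S \<subseteq> sigma_vertices n q" "k_independent (sigma_edges n q a) k S"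
      unfolding A_def by blast
    obtain B where B: "B \<in> maximal_feasible q k a n" "card S \<le> seq_value n q a B"
      using upper[OF an sa a1 aq kr S(2,3)] by blast
    have "seq_value n q a B \<le> R" unfolding R_def using finV B(1) Vimg by (simp add: Max_ge)
    then show "y \<le> R" using S(1) B(2) by simp
  next
    have "R \<in> Vals" unfolding R_def using finV neV by (rule Max_in)
    then obtain B where B: "B \<in> maximal_feasible q k a n" "R = seq_value n q a B" unfolding Vimg by blast
    have fB: "feasible q k a n B" using B(1) unfolding maximal_feasible_def by blast
    obtain S where S: "S \<subseteq> sigma_vertices n q" "k_independent (sigma_edges n q a) k S" "card S = seq_value n q a B"
      using lower[OF an sa aq kr fB] by blast
    have "R = card S" using S(3) B(2) by simp
    then show "R \<in> A" unfolding A_def using S(1,2) by blast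
  qed
  then show ?thesis unfolding alpha_k_def A_def[symmetric] Vals_def[symmetric] R_def .
qed


end
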